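(* Let $X_1,X_2,\dots$ be independent normally distributed random variables with $\mathbb{E}[X_i]=\mu_i$ and $\mathbb{E}[|X_i-\mu_i|^2]=\nu_i>0$ for $i\in\mathbb{N}$. Define $S_n=\sum_{i=1}^nX_i$, $\overline{\mu}_n=\frac1n\sum_{i=1}^n\mu_i$, $\overline{\nu}_n=\frac1n\sum_{i=1}^n\nu_i$, and $\mathcal{V}(s,n)=n\big(\overline{\mu}_ns+\frac{\overline{\nu}_ns^2}{2}\big)$ for $s\in\mathbb{R}$, $n\in\mathbb{N}$. Then for every positive integer $m$ and all $\theta\in\mathbb{R}$, \[ \Pr\Big\{\sup_{n\in\mathbb{N}}\big[\zeta(S_n-m\theta)-\mathcal{V}(\zeta,n)+\mathcal{V}(\zeta,m)\big]\ge0\Big\}\le\Big[\exp\Big(-\frac{|\theta-\overline{\mu}_m|^2}{2\overline{\nu}_m}\Big)\Big]^m, \] where $\zeta=\frac{\theta-\overline{\mu}_m}{\overline{\nu}_m}$.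
   Context: $\mathbb{N}$ denotes the set of positive integers. *)

theory Defs
  imports "HOL-Probability.Probability"
begin

definition mean_bar :: "(nat \<Rightarrow> real) \<Rightarrow> nat \<Rightarrow> real" where
  "mean_bar a n = (\<Sum>i=1..n. a i) / real n"

definition calV :: "(nat \<Rightarrow> real) \<Rightarrow> (nat \<Rightarrow> real) \<Rightarrow> real \<Rightarrow> nat \<Rightarrow> real" where
  "calV \<mu> \<nu> s n = real n * (mean_bar \<mu> n * s + mean_bar \<nu> n * s^2 / 2)"

end

theory Submission
  imports Defs
begin

lemma normal_mgf:
  assumes "\<sigma> > 0"
  shows "normal_density \<mu> \<sigma> x * exp (z*x - z*\<mu> - z^2*\<sigma>^2/2) = normal_density (\<mu> + z*\<sigma>^2) \<sigma> x"
proof -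
  have "-(x - \<mu>)\<^sup>2/ (2 * \<sigma>\<^sup>2) + (z*x - z*\<mu> - z^2*\<sigma>^2/2) = -(x - (\<mu> + z*\<sigma>^2))\<^sup>2/ (2 * \<sigma>\<^sup>2)"
    using assms by (simp add: field_simps power2_eq_square)
  then show ?thesis unfolding normal_density_def
    by (metis exp_add mult.assoc)
qed

lemma normal_mgf_nn:
  assumes "distributed M lborel X (normal_density \<mu> (sqrt \<nu>))" "\<nu> > 0"
  shows "(\<integral>\<^sup>+\<omega>. ennreal (exp (z*X \<omega> - z*\<mu> - z^2*\<nu>/2)) \<partial>M) = 1"
proof -
  have "(\<integral>\<^sup>+\<omega>. ennreal (exp (z*X \<omega> - z*\<mu> - z^2*\<nu>/2)) \<partial>M)
     = (\<integral>\<^sup>+x. ennreal (normal_density \<mu> (sqrt \<nu>) x) * ennreal (exp (z*x - z*\<mu> - z^2*\<nu>/2)) \<partial>lborel)"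
    by (rule distributed_nn_integral[OF assms(1), symmetric]) measurable
  also have "\<dots> = (\<integral>\<^sup>+x. ennreal (normal_density (\<mu> + z*(sqrt \<nu>)^2) (sqrt \<nu>) x) \<partial>lborel)"
    using normal_mgf[of "sqrt \<nu>" \<mu> x z for x] assms(2)
    by (intro nn_integral_cong) (simp add: ennreal_mult'[symmetric])
  also have "\<dots> = 1"
    using assms(2) by (subst nn_integral_eq_integral) (auto intro!: integrable_normal_density integral_normal_density)
  finally show ?thesis .
qed

lemma mart:
  fixes X :: "nat \<Rightarrow> 'a \<Rightarrow> real" and y :: "nat \<Rightarrow> real \<Rightarrow> real" and G :: "(nat \<Rightarrow> real) \<Rightarrow> real" and n N :: nat
  assumes P: "prob_space M" and ind: "prob_space.indep_vars M (\<lambda>_. borel) X {1..}"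
    and ym: "\<And>i. y i \<in> borel_measurable borel" and ypos: "\<And>i x. y i x \<ge> 0"
    and y1: "\<And>i. i \<ge> 1 \<Longrightarrow> (\<integral>\<^sup>+\<omega>. ennreal (y i (X i \<omega>)) \<partial>M) = 1"
    and G: "G \<in> borel_measurable (PiM {1..n} (\<lambda>_. borel))" "\<And>v. G v \<ge> 0"
    and n: "n \<le> N"
  shows "(\<integral>\<^sup>+\<omega>. ennreal (G (restrict (\<lambda>i. X i \<omega>) {1..n}) * (\<Prod>i\<in>{n<..N}. y i (X i \<omega>))) \<partial>M)
       = (\<integral>\<^sup>+\<omega>. ennreal (G (restrict (\<lambda>i. X i \<omega>) {1..n})) \<partial>M)"
proof -
  interpret prob_space M by fact
  define K where "K j = (if j = n then {1..n} else {j})" for j :: nat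
  define H where "H j = (if j = n then G else (\<lambda>v. y j (v j)))" for j :: nat
  have i1: "indep_vars (\<lambda>j. PiM (K j) (\<lambda>_. borel)) (\<lambda>j \<omega>. restrict (\<lambda>i. X i \<omega>) (K j)) {n..N}"
    by (rule indep_vars_restrict[OF ind]) (auto simp: K_def disjoint_family_on_def)
  have i2: "indep_vars (\<lambda>_. borel) (\<lambda>j \<omega>. H j (restrict (\<lambda>i. X i \<omega>) (K j))) {n..N}"
  proof (rule indep_vars_compose2[OF i1])
    fix j assume "j \<in> {n..N}"
    show "H j \<in> borel_measurable (PiM (K j) (\<lambda>_. borel))"
    proof (cases "j = n")
      case True then show ?thesis using G by (simp add: H_def K_def)
    next
      case False then show ?thesis unfolding H_def K_def
        using measurable_compose[OF measurable_component_singleton[of j "{j}" "\<lambda>_. borel"] ym[of j]] by simp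
    qed
  qed
  have i3: "indep_vars (\<lambda>_. borel) (\<lambda>j \<omega>. ennreal (H j (restrict (\<lambda>i. X i \<omega>) (K j)))) {n..N}"
    by (rule indep_vars_compose2[OF i2]) (rule measurable_ennreal)
  have Hpos: "\<And>j v. H j v \<ge> 0" by (simp add: H_def G ypos)
  have "(\<integral>\<^sup>+\<omega>. ennreal (\<Prod>j\<in>{n..N}. H j (restrict (\<lambda>i. X i \<omega>) (K j))) \<partial>M)
      = (\<Prod>j\<in>{n..N}. \<integral>\<^sup>+\<omega>. ennreal (H j (restrict (\<lambda>i. X i \<omega>) (K j))) \<partial>M)"
    using indep_vars_nn_integral[OF _ i3] by (simp add: prod_ennreal Hpos)
  also have "\<dots> = (\<integral>\<^sup>+\<omega>. ennreal (H n (restrict (\<lambda>i. X i \<omega>) (K n))) \<partial>M) *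
      (\<Prod>j\<in>{n<..N}. \<integral>\<^sup>+\<omega>. ennreal (H j (restrict (\<lambda>i. X i \<omega>) (K j))) \<partial>M)"
    using n by (subst prod.head) auto
  also have "(\<Prod>j\<in>{n<..N}. \<integral>\<^sup>+\<omega>. ennreal (H j (restrict (\<lambda>i. X i \<omega>) (K j))) \<partial>M) = 1"
    using n by (intro prod.neutral) (auto simp: H_def K_def y1)
  also have "(\<lambda>\<omega>. (\<Prod>j\<in>{n..N}. H j (restrict (\<lambda>i. X i \<omega>) (K j))))
     = (\<lambda>\<omega>. G (restrict (\<lambda>i. X i \<omega>) {1..n}) * (\<Prod>i\<in>{n<..N}. y i (X i \<omega>)))"
    using n by (auto simp: prod.head H_def K_def intro!: prod.cong)
  finally show ?thesis by (simp only: H_def K_def if_True simp_thms mult_1_right)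
qed


lemma ville_finite:
  fixes X :: "nat \<Rightarrow> 'a \<Rightarrow> real" and y :: "nat \<Rightarrow> real \<Rightarrow> real" and c :: real and N :: nat
  assumes P: "prob_space M" and ind: "prob_space.indep_vars M (\<lambda>_. borel) X {1..}"
    and ym: "\<And>i. y i \<in> borel_measurable borel" and ypos: "\<And>i x. y i x \<ge> 0"
    and y1: "\<And>i. i \<ge> 1 \<Longrightarrow> (\<integral>\<^sup>+\<omega>. ennreal (y i (X i \<omega>)) \<partial>M) = 1"
    and c: "c > 0"
  shows "measure M {\<omega>\<in>space M. \<exists>n\<in>{1..N}. c \<le> (\<Prod>i=1..n. y i (X i \<omega>))} \<le> 1 / c"
proof -
  interpret prob_space M by fact
  have Xm: "X i \<in> borel_measurable M" if "i \<ge> 1" for i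
    using ind that unfolding indep_vars_def by auto
  define Lw where "Lw k \<omega> = (\<Prod>i=1..k. y i (X i \<omega>))" for k \<omega>
  define L where "L k v = (\<Prod>i=1..k. y i (v i))" for k and v :: "nat \<Rightarrow> real"
  define G where "G n v = L n v * (if c \<le> L n v then 1 else 0) * (\<Prod>k\<in>{1..<n}. if L k v < c then 1 else 0)"
    for n v
  define r where "r n \<omega> = restrict (\<lambda>i. X i \<omega>) {1..n}" for n \<omega>
  define A where "A n \<omega> \<longleftrightarrow> c \<le> Lw n \<omega> \<and> (\<forall>k\<in>{1..<n}. Lw k \<omega> < c)" for n \<omega>
  define B where "B = {\<omega>\<in>space M. \<exists>n\<in>{1..N}. c \<le> Lw n \<omega>}"
  have Lwm[measurable]: "Lw k \<in> borel_measurable M" for k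
    unfolding Lw_def
    apply (rule borel_measurable_prod)
    subgoal for i using measurable_compose[OF Xm[of i] ym[of i]] by auto
    done
  have Lm: "L k \<in> borel_measurable (PiM {1..n} (\<lambda>_. borel))" if "k \<le> n" for k n
    unfolding L_def
    apply (rule borel_measurable_prod)
    subgoal for i using measurable_compose[OF measurable_component_singleton[of i "{1..n}" "\<lambda>_. borel"] ym[of i]] that by auto
    done
  have Gm: "G n \<in> borel_measurable (PiM {1..n} (\<lambda>_. borel))" for n
    unfolding G_def
    apply (intro borel_measurable_times borel_measurable_prod)
    subgoal using Lm[of n n] by simp
    subgoal proof -
      have [measurable]: "L n \<in> borel_measurable (PiM {1..n} (\<lambda>_. borel))" by (rule Lm) simp
      show ?thesis by measurable
    qed
    subgoal for k proof -
      assume "k \<in> {1..<n}"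
      then have [measurable]: "L k \<in> borel_measurable (PiM {1..n} (\<lambda>_. borel))" by (intro Lm) simp
      show ?thesis by measurable
    qed
    done
  have rm: "r n \<in> M \<rightarrow>\<^sub>M PiM {1..n} (\<lambda>_. borel)" for n
    unfolding r_def by (rule measurable_restrict) (auto intro: Xm)
  have Grm: "(\<lambda>\<omega>. G n (r n \<omega>)) \<in> borel_measurable M" for n
    using measurable_compose[OF rm Gm] .
  have Lr: "L k (r n \<omega>) = Lw k \<omega>" if "k \<le> n" for k n \<omega>
    unfolding L_def Lw_def r_def using that by (intro prod.cong) auto
  have Lwpos: "Lw k \<omega> \<ge> 0" for k \<omega>
    unfolding Lw_def by (intro prod_nonneg) (auto simp: ypos)
  have Gr: "G n (r n \<omega>) = (if A n \<omega> then Lw n \<omega> else 0)" for n \<omega>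
  proof -
    have "(\<Prod>k\<in>{1..<n}. if L k (r n \<omega>) < c then 1 else 0) = (if (\<forall>k\<in>{1..<n}. Lw k \<omega> < c) then 1 else (0::real))"
    proof (cases "\<forall>k\<in>{1..<n}. Lw k \<omega> < c")
      case True then show ?thesis using Lr by (intro trans[OF prod.neutral]) auto
    next
      case False
      then obtain k where k: "k \<in> {1..<n}" "\<not> Lw k \<omega> < c" by auto
      have z0: "(\<Prod>k\<in>{1..<n}. if L k (r n \<omega>) < c then 1 else 0) = (0::real)"
        using k Lr[of k n \<omega>] by (intro prod_zero bexI[of _ k]) auto
      show ?thesis by (subst if_not_P[OF False]) (rule z0)
    qed
    then show ?thesis unfolding G_def A_def using Lr[of n n] by auto
  qed
  have Bm: "B \<in> sets M"
    unfolding B_def by measurable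
  have pt1: "c * indicator B \<omega> \<le> (\<Sum>n\<in>{1..N}. G n (r n \<omega>))" for \<omega>
  proof (cases "\<omega> \<in> B")
    case False then show ?thesis
      by (auto simp: Gr Lwpos intro!: sum_nonneg)
  next
    case True
    then obtain n where n: "n \<in> {1..N}" "c \<le> Lw n \<omega>" unfolding B_def by auto
    define n0 where "n0 = (LEAST n. n \<in> {1..N} \<and> c \<le> Lw n \<omega>)"
    have n0: "n0 \<in> {1..N}" "c \<le> Lw n0 \<omega>"
      using LeastI[of "\<lambda>n. n \<in> {1..N} \<and> c \<le> Lw n \<omega>", OF conjI[OF n]] unfolding n0_def by auto
    have "\<forall>k\<in>{1..<n0}. Lw k \<omega> < c"
    proof
      fix k assume k: "k \<in> {1..<n0}"
      then have "k \<in> {1..N}" using n0 by auto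
      with not_less_Least[of k "\<lambda>n. n \<in> {1..N} \<and> c \<le> Lw n \<omega>"] k show "Lw k \<omega> < c"
        unfolding n0_def[symmetric] by auto
    qed
    then have "A n0 \<omega>" using n0 unfolding A_def by auto
    then have "c * indicator B \<omega> \<le> G n0 (r n0 \<omega>)" using True n0 by (simp add: Gr)
    also have "\<dots> \<le> (\<Sum>n\<in>{1..N}. G n (r n \<omega>))"
      by (rule member_le_sum) (use n0 in \<open>auto simp: Gr Lwpos\<close>)
    finally show ?thesis .
  qed
  have split: "Lw n \<omega> * (\<Prod>i\<in>{n<..N}. y i (X i \<omega>)) = Lw N \<omega>" if "n \<le> N" for n \<omega>
  proof -
    have "{1..N} = {1..n} \<union> {n<..N}" using that by auto
    then show ?thesis unfolding Lw_def by (simp add: prod.union_disjoint[symmetric] ivl_disj_int)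
  qed
  have pt2: "(\<Sum>n\<in>{1..N}. G n (r n \<omega>) * (\<Prod>i\<in>{n<..N}. y i (X i \<omega>))) \<le> Lw N \<omega>" for \<omega>
  proof -
    have eq: "(\<Sum>n\<in>{1..N}. G n (r n \<omega>) * (\<Prod>i\<in>{n<..N}. y i (X i \<omega>)))
       = (\<Sum>n\<in>{1..N}. if A n \<omega> then Lw N \<omega> else 0)"
      by (intro sum.cong) (auto simp: Gr split)
    show ?thesis
    proof (cases "\<exists>n1\<in>{1..N}. A n1 \<omega>")
      case False then show ?thesis using eq Lwpos by auto
    next
      case True
      then obtain n1 where n1: "n1 \<in> {1..N}" "A n1 \<omega>" by auto
      have uniq: "n = n1" if "n \<in> {1..N}" "A n \<omega>" for n
      proof -
        have "\<not> n < n1"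
        proof
          assume "n < n1"
          then have "n \<in> {1..<n1}" using that by auto
          then have "Lw n \<omega> < c" using n1(2) unfolding A_def by blast
          then show False using that(2) unfolding A_def by linarith
        qed
        moreover have "\<not> n1 < n"
        proof
          assume "n1 < n"
          then have "n1 \<in> {1..<n}" using n1 by auto
          then have "Lw n1 \<omega> < c" using that(2) unfolding A_def by blast
          then show False using n1(2) unfolding A_def by linarith
        qed
        ultimately show ?thesis by linarith
      qed
      have "(\<Sum>n\<in>{1..N}. if A n \<omega> then Lw N \<omega> else 0) = (\<Sum>n\<in>{1..N}. if n = n1 then Lw N \<omega> else 0)"
      proof (intro sum.cong refl)
        fix n assume "n \<in> {1..N}"
        then have "A n \<omega> \<longleftrightarrow> n = n1" using uniq n1 by blast
        then show "(if A n \<omega> then Lw N \<omega> else 0) = (if n = n1 then Lw N \<omega> else 0)" by simp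
      qed
      also have "\<dots> = Lw N \<omega>" using n1 by simp
      finally show ?thesis using eq by simp
    qed
  qed
  have Gpos: "G n v \<ge> 0" for n v
    unfolding G_def L_def by (intro mult_nonneg_nonneg prod_nonneg) (auto simp: ypos)
  have "ennreal c * emeasure M B = (\<integral>\<^sup>+\<omega>. ennreal c * indicator B \<omega> \<partial>M)"
    by (rule nn_integral_cmult_indicator[symmetric, OF Bm])
  also have "\<dots> \<le> (\<integral>\<^sup>+\<omega>. (\<Sum>n\<in>{1..N}. ennreal (G n (r n \<omega>))) \<partial>M)"
  proof (intro nn_integral_mono)
    fix \<omega>
    have "ennreal c * indicator B \<omega> = ennreal (c * indicator B \<omega>)"
      using c by (simp add: ennreal_mult indicator_def)
    also have "\<dots> \<le> ennreal (\<Sum>n\<in>{1..N}. G n (r n \<omega>))" by (rule ennreal_leI[OF pt1])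
    also have "\<dots> = (\<Sum>n\<in>{1..N}. ennreal (G n (r n \<omega>)))" using Gpos by simp
    finally show "ennreal c * indicator B \<omega> \<le> (\<Sum>n\<in>{1..N}. ennreal (G n (r n \<omega>)))" .
  qed
  also have "\<dots> = (\<Sum>n\<in>{1..N}. \<integral>\<^sup>+\<omega>. ennreal (G n (r n \<omega>)) \<partial>M)"
    by (rule nn_integral_sum) (use Grm in simp)
  also have "\<dots> = (\<Sum>n\<in>{1..N}. \<integral>\<^sup>+\<omega>. ennreal (G n (r n \<omega>) * (\<Prod>i\<in>{n<..N}. y i (X i \<omega>))) \<partial>M)"
    unfolding r_def
    by (intro sum.cong refl mart[symmetric, OF P ind ym ypos y1 Gm Gpos]) auto
  also have "\<dots> = (\<integral>\<^sup>+\<omega>. (\<Sum>n\<in>{1..N}. ennreal (G n (r n \<omega>) * (\<Prod>i\<in>{n<..N}. y i (X i \<omega>)))) \<partial>M)"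
    unfolding r_def
  proof (rule nn_integral_sum[symmetric])
    fix n
    have "(\<lambda>\<omega>. \<Prod>i\<in>{n<..N}. y i (X i \<omega>)) \<in> borel_measurable M"
      apply (rule borel_measurable_prod)
      subgoal for i using measurable_compose[OF Xm[of i] ym[of i]] by auto
      done
    then show "(\<lambda>\<omega>. ennreal (G n (restrict (\<lambda>i. X i \<omega>) {1..n}) * (\<Prod>i\<in>{n<..N}. y i (X i \<omega>)))) \<in> borel_measurable M"
      using Grm[of n, unfolded r_def]
      by (intro measurable_compose[OF _ measurable_ennreal] borel_measurable_times)
  qed
  also have "\<dots> \<le> (\<integral>\<^sup>+\<omega>. ennreal (Lw N \<omega>) \<partial>M)"
  proof (intro nn_integral_mono)
    fix \<omega>
    have "(\<Sum>n\<in>{1..N}. ennreal (G n (r n \<omega>) * (\<Prod>i\<in>{n<..N}. y i (X i \<omega>))))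
       = ennreal (\<Sum>n\<in>{1..N}. G n (r n \<omega>) * (\<Prod>i\<in>{n<..N}. y i (X i \<omega>)))"
      using Gpos ypos by (intro sum_ennreal) (auto intro!: mult_nonneg_nonneg prod_nonneg)
    also have "\<dots> \<le> ennreal (Lw N \<omega>)" by (rule ennreal_leI[OF pt2])
    finally show "(\<Sum>n\<in>{1..N}. ennreal (G n (r n \<omega>) * (\<Prod>i\<in>{n<..N}. y i (X i \<omega>)))) \<le> ennreal (Lw N \<omega>)" .
  qed
  also have "\<dots> = 1"
  proof -
    have "(\<integral>\<^sup>+\<omega>. ennreal ((\<lambda>_. 1) (restrict (\<lambda>i. X i \<omega>) {1..0}) * (\<Prod>i\<in>{0<..N}. y i (X i \<omega>))) \<partial>M)
      = (\<integral>\<^sup>+\<omega>. ennreal ((\<lambda>_. 1) (restrict (\<lambda>i. X i \<omega>) {1..0})) \<partial>M)"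
      by (rule mart[OF P ind ym ypos y1]) auto
    moreover have "{0<..N} = {1..N}" by auto
    ultimately show ?thesis by (simp add: Lw_def emeasure_space_1)
  qed
  finally have "ennreal c * emeasure M B \<le> 1" .
  then have "ennreal (c * measure M B) \<le> ennreal 1"
    using c by (simp add: emeasure_eq_measure ennreal_mult)
  then have "c * measure M B \<le> 1" by (simp add: ennreal_le_iff)
  then show ?thesis using c unfolding B_def Lw_def by (simp add: field_simps)
qed



theorem theorem17:
  fixes M :: "'a measure" and X :: "nat \<Rightarrow> 'a \<Rightarrow> real"
    and \<mu> \<nu> :: "nat \<Rightarrow> real" and m :: nat and \<theta> :: real
  assumes "prob_space M"
    and "prob_space.indep_vars M (\<lambda>_. borel) X {1..}"
    and "\<And>i. i \<ge> 1 \<Longrightarrow> \<nu> i > 0"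
    and "\<And>i. i \<ge> 1 \<Longrightarrow>
           distributed M lborel (X i) (normal_density (\<mu> i) (sqrt (\<nu> i)))"
    and "m \<ge> 1"
  shows "let \<zeta> = (\<theta> - mean_bar \<mu> m) / mean_bar \<nu> m in
     measure M {\<omega> \<in> space M.
        (SUP n\<in>{1..}. ereal (\<zeta> * ((\<Sum>i=1..n. X i \<omega>) - real m * \<theta>)
                                 - calV \<mu> \<nu> \<zeta> n + calV \<mu> \<nu> \<zeta> m)) \<ge> 0}
     \<le> (exp (- (\<bar>\<theta> - mean_bar \<mu> m\<bar>^2) / (2 * mean_bar \<nu> m))) ^ m"
proof -
  interpret prob_space M by fact
  note P = assms(1) and ind = assms(2)
  define z where "z = (\<theta> - mean_bar \<mu> m) / mean_bar \<nu> m"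
  define y where "y i x = exp (z*x - z*\<mu> i - z^2*\<nu> i/2)" for i x
  define a where "a = real m * z * \<theta> - calV \<mu> \<nu> z m"
  define E where "E = {\<omega> \<in> space M.
        (SUP n\<in>{1..}. ereal (z * ((\<Sum>i=1..n. X i \<omega>) - real m * \<theta>)
                                 - calV \<mu> \<nu> z n + calV \<mu> \<nu> z m)) \<ge> 0}"
  have ym: "y i \<in> borel_measurable borel" for i unfolding y_def by measurable
  have ypos: "y i x \<ge> 0" for i x unfolding y_def by simp
  have y1: "(\<integral>\<^sup>+\<omega>. ennreal (y i (X i \<omega>)) \<partial>M) = 1" if "i \<ge> 1" for i
    unfolding y_def by (rule normal_mgf_nn[OF assms(4)[OF that] assms(3)[OF that]])
  have Xm: "X i \<in> borel_measurable M" if "i \<ge> 1" for i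
    using ind that unfolding indep_vars_def by auto
  have Lwm[measurable]: "(\<lambda>\<omega>. \<Prod>i=1..k. y i (X i \<omega>)) \<in> borel_measurable M" for k
    apply (rule borel_measurable_prod)
    subgoal for i using measurable_compose[OF Xm[of i] ym[of i]] by auto
    done
  have Lw_eq: "(\<Prod>i=1..n. y i (X i \<omega>)) = exp (z * (\<Sum>i=1..n. X i \<omega>) - calV \<mu> \<nu> z n)"
    if "n \<ge> 1" for n \<omega>
  proof -
    have "(\<Prod>i=1..n. y i (X i \<omega>)) = exp (\<Sum>i=1..n. z*X i \<omega> - z*\<mu> i - z^2*\<nu> i/2)"
      unfolding y_def by (simp add: exp_sum)
    also have "(\<Sum>i=1..n. z*X i \<omega> - z*\<mu> i - z^2*\<nu> i/2)
        = z * (\<Sum>i=1..n. X i \<omega>) - (z * (\<Sum>i=1..n. \<mu> i) + z^2 * (\<Sum>i=1..n. \<nu> i) / 2)"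
      by (simp add: sum_subtractf sum_distrib_left sum_divide_distrib)
    also have "z * (\<Sum>i=1..n. \<mu> i) + z^2 * (\<Sum>i=1..n. \<nu> i) / 2 = calV \<mu> \<nu> z n"
      using that unfolding calV_def mean_bar_def by (simp add: field_simps)
    finally show ?thesis .
  qed
  have f_eq: "z * ((\<Sum>i=1..n. X i \<omega>) - real m * \<theta>) - calV \<mu> \<nu> z n + calV \<mu> \<nu> z m
      = (z * (\<Sum>i=1..n. X i \<omega>) - calV \<mu> \<nu> z n) - a" for n \<omega>
    unfolding a_def by (simp add: algebra_simps)
  have key: "measure M E \<le> exp (\<epsilon> - a)" if \<epsilon>: "\<epsilon> > 0" for \<epsilon>
  proof -
    define c where "c = exp (a - \<epsilon>)"
    have c: "c > 0" unfolding c_def by simp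
    define B where "B N = {\<omega>\<in>space M. \<exists>n\<in>{1..N}. c \<le> (\<Prod>i=1..n. y i (X i \<omega>))}" for N
    have vf: "measure M (B N) \<le> 1 / c" for N
      unfolding B_def by (rule ville_finite[OF P ind ym ypos y1 c])
    have "B N \<in> sets M" for N unfolding B_def by measurable
    then have Bs: "range B \<subseteq> sets M" by auto
    have inc: "incseq B"
    proof (rule incseq_SucI)
      fix N
      show "B N \<subseteq> B (Suc N)" unfolding B_def by fastforce
    qed
    have lim: "measure M (\<Union>(range B)) \<le> 1 / c"
      using finite_Lim_measure_incseq[OF Bs inc] vf by (intro LIMSEQ_le_const2) auto
    have sub: "E \<subseteq> \<Union>(range B)"
    proof
      fix \<omega> assume \<omega>: "\<omega> \<in> E"
      show "\<omega> \<in> \<Union>(range B)"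
      proof (rule ccontr)
        assume nin: "\<omega> \<notin> \<Union>(range B)"
        have "ereal (z * ((\<Sum>i=1..n. X i \<omega>) - real m * \<theta>) - calV \<mu> \<nu> z n + calV \<mu> \<nu> z m) \<le> ereal (- \<epsilon>)"
          if n: "n \<in> {1..}" for n
        proof -
          have "\<omega> \<notin> B n" using nin by auto
          moreover have "\<omega> \<in> space M" using \<omega> unfolding E_def mem_Collect_eq by (rule conjunct1)
          ultimately have "\<not> c \<le> (\<Prod>i=1..n. y i (X i \<omega>))" using n unfolding B_def by auto
          then have "exp (z * (\<Sum>i=1..n. X i \<omega>) - calV \<mu> \<nu> z n) < exp (a - \<epsilon>)"
            using Lw_eq[of n \<omega>] n unfolding c_def by auto
          then have "z * (\<Sum>i=1..n. X i \<omega>) - calV \<mu> \<nu> z n < a - \<epsilon>" by simp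
          then show ?thesis unfolding f_eq by simp
        qed
        then have le: "(SUP n\<in>{1..}. ereal (z * ((\<Sum>i=1..n. X i \<omega>) - real m * \<theta>)
                                 - calV \<mu> \<nu> z n + calV \<mu> \<nu> z m)) \<le> ereal (- \<epsilon>)"
          by (rule SUP_least)
        have ge: "(SUP n\<in>{1..}. ereal (z * ((\<Sum>i=1..n. X i \<omega>) - real m * \<theta>)
                                 - calV \<mu> \<nu> z n + calV \<mu> \<nu> z m)) \<ge> 0"
          using \<omega> unfolding E_def mem_Collect_eq by (rule conjunct2)
        have "0 \<le> ereal (- \<epsilon>)" by (rule order_trans[OF ge le])
        then show False using \<epsilon> by simp
      qed
    qed
    have "measure M E \<le> measure M (\<Union>(range B))"
      using Bs by (intro finite_measure_mono[OF sub]) (auto intro: sets.countable_UN)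
    also have "\<dots> \<le> 1 / c" by (rule lim)
    also have "1 / c = exp (\<epsilon> - a)" unfolding c_def by (simp add: divide_inverse exp_minus[symmetric])
    finally show ?thesis .
  qed
  have E_le: "measure M E \<le> exp (- a)"
  proof (rule ccontr)
    assume "\<not> measure M E \<le> exp (- a)"
    then have gt: "measure M E > exp (- a)" by simp
    then have pos: "measure M E > 0" by (meson exp_gt_zero less_trans)
    define \<epsilon> where "\<epsilon> = (ln (measure M E) + a) / 2"
    have "- a < ln (measure M E)" using gt pos by (metis ln_exp ln_less_cancel_iff exp_gt_zero)
    then have "\<epsilon> > 0" unfolding \<epsilon>_def by simp
    from key[OF this] have "measure M E \<le> exp (\<epsilon> - a)" .
    also have "exp (\<epsilon> - a) < exp (ln (measure M E))"
      using \<open>- a < ln (measure M E)\<close> unfolding \<epsilon>_def by simp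
    also have "\<dots> = measure M E" using pos by simp
    finally show False by simp
  qed
  have nb: "mean_bar \<nu> m > 0"
    unfolding mean_bar_def using assms(3,5) by (intro divide_pos_pos sum_pos) auto
  have "exp (- a) = (exp (- (\<bar>\<theta> - mean_bar \<mu> m\<bar>^2) / (2 * mean_bar \<nu> m))) ^ m"
  proof -
    have "- a = real m * (- (\<bar>\<theta> - mean_bar \<mu> m\<bar>^2) / (2 * mean_bar \<nu> m))"
      using nb unfolding a_def calV_def z_def by (simp add: field_simps power2_eq_square)
    then show ?thesis by (metis exp_of_nat_mult)
  qed
  with E_le show ?thesis unfolding Let_def z_def[symmetric] E_def[symmetric] by simp
qed

end
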